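(* Let $\mathfrak A^{(0)}_{-1}(q;t):=\mathrm{tr}_{\mathcal F^{-1}_{(0)}}\big(q^{L_0}\mathsf A(t)\big)$. Then $$\mathfrak A^{(0)}_{-1}(q;t)=\frac{{}_2\Phi_1(0,0;q;q)}{t^{-1/2}-t^{1/2}}+t^{1/2}\sum_{i=1}^\infty\frac{q^{i-1}}{(q)_{i-1}(q)_{i-1}}\big({}_3\Phi_2(0,0,q;tq^i,q^i;q)-1\big) -t^{-1/2}\sum_{i=1}^\infty\frac{q^{i-1}}{(q)_{i-1}(q)_{i-1}}\big({}_3\Phi_2(0,0,q;t^{-1}q^i,q^i;q)-1\big).$$
   Context: Let $\mathcal F^{-1}$ be the bosonic Fock space generated from a vacuum $|0\rangle$ by commuting creation operators $\gamma^+_{-r},\gamma^-_{-r}$, $r\in\frac12+\mathbb Z_{\ge0}$ (with $[\gamma^+_r,\gamma^-_s]=\delta_{r+s,0}$, all other brackets zero, $\gamma^\pm_r|0\rangle=0$ for $r>0$). It has basis $v=\gamma^+_{-r_1}\cdots\gamma^+_{-r_a}\gamma^-_{-s_1}\cdots\gamma^-_{-s_b}|0\rangle$ with $r_1\ge\cdots\ge r_a>0$, $s_1\ge\cdots\ge s_b>0$ in $\frac12+\mathbb Z$. $L_0$ acts on $v$ by $\sum_i r_i+\sum_j s_j$. $\mathcal F^{-1}_{(m)}$ is the span of basis vectors with $a-b=m$. The operator $\mathsf A(t)=-\sum_{r\in\frac12+\mathbb Z}t^r\gamma^+_{-r}\gamma^-_r$ acts diagonally: $\mathsf A(t)v=\big(\sum_{i}t^{r_i}-\sum_j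 t^{-s_j}+\frac{1}{t^{-1/2}-t^{1/2}}\big)v$. Notation: $(a)_n=(1-a)\cdots(1-aq^{n-1})$, $(a)_0=1$, $(a)_\infty=\prod_{i\ge0}(1-aq^i)$, and ${}_r\Phi_s(a_1,\dots,a_r;b_1,\dots,b_s;z)=\sum_{n\ge0}\frac{(a_1)_n\cdots(a_r)_n}{(b_1)_n\cdots(b_s)_n(q)_n}\big((-1)^nq^{n(n-1)/2}\big)^{1+s-r}z^n$. *)

theory Defs
  imports "HOL-Computational_Algebra.Formal_Power_Series" "HOL-Library.Multiset"
begin

text \<open>All q-series are formal power series in q (= fps_X) over the complex numbers.
  The parameter t enters through s = t^(1/2), a fixed nonzero complex number.\<close>

abbreviation qq :: "complex fps" where "qq \<equiv> fps_X"

definition qpoch :: "complex fps \<Rightarrow> nat \<Rightarrow> complex fps" where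
  "qpoch a n = (\<Prod>k<n. 1 - a * qq ^ k)"

text \<open>The exponent is taken in nat, which is exact
  whenever r <= s+1 (the only cases used here, where it is 0).\<close>
definition qPhi :: "complex fps list \<Rightarrow> complex fps list \<Rightarrow> complex fps \<Rightarrow> complex fps" where
  "qPhi as bs z = (\<Sum>n. (\<Prod>a\<leftarrow>as. qpoch a n)
       * inverse ((\<Prod>b\<leftarrow>bs. qpoch b n) * qpoch qq n)
       * ((-1) ^ n * qq ^ (n * (n - 1) div 2)) ^ (Suc (length bs) - length as)
       * z ^ n)"

text \<open>Basis vectors of F^{-1}: a pair (A,B) of multisets of naturals, where k in A stands for
  the factor gamma^+_{-(k+1/2)} and l in B for gamma^-_{-(l+1/2)}.
  Charge a-b = size A - size B. The L_0 eigenvalue is sum (k+1/2) + sum (l+1/2);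
  in charge 0 this is the integer sum A + sum B + size A.\<close>
definition L0_charge0 :: "nat multiset \<Rightarrow> nat multiset \<Rightarrow> nat" where
  "L0_charge0 A B = sum_mset A + sum_mset B + size A"

text \<open>Eigenvalue of A(t) on the basis vector (A,B), with t^(k+1/2) = s^(2k+1).\<close>
definition A_eig :: "complex \<Rightarrow> nat multiset \<Rightarrow> nat multiset \<Rightarrow> complex" where
  "A_eig s A B = (\<Sum>k\<in>#A. s ^ (2*k+1)) - (\<Sum>l\<in>#B. inverse (s ^ (2*l+1)))
                 + 1 / (inverse s - s)"

definition trace_A0 :: "complex \<Rightarrow> complex fps" where
  "trace_A0 s = Abs_fps (\<lambda>n. \<Sum>(A,B)\<in>{(A,B). size A = size B \<and> L0_charge0 A B = n}. A_eig s A B)"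

end

theory Submission
  imports Defs
begin
unbundle fps_syntax


definition MS :: "nat \<Rightarrow> nat \<Rightarrow> nat multiset set" where
  "MS m k = {A. size A = m \<and> sum_mset A = k}"

lemma mem_le_sum_mset: "x \<in># (A::nat multiset) \<Longrightarrow> x \<le> sum_mset A"
  by (metis le_add1 multi_member_split sum_mset.add_mset)

lemma finite_MS: "finite (MS m k)"
proof -
  have "MS m k \<subseteq> multisets_of_size {0..k} m"
    by (auto simp: MS_def multisets_of_size_def dest: mem_le_sum_mset)
  thus ?thesis by (rule finite_subset) auto
qed

lemma sum_mset_image_Suc: "sum_mset (image_mset Suc B) = sum_mset B + size B"
  by (induction B) auto

lemma MS_0: "MS 0 k = (if k = 0 then {{#}} else {})"
  by (auto simp: MS_def)

lemma image_mset_pred_Suc: "image_mset (\<lambda>x. x - 1) (image_mset Suc B) = B"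
  by (simp add: multiset.map_comp comp_def)

lemma sum_MS_Suc:
  "(\<Sum>A\<in>MS (Suc m) k. (\<phi> A :: complex)) = (\<Sum>B\<in>MS m k. \<phi> (add_mset 0 B))
     + (if Suc m \<le> k then (\<Sum>B\<in>MS (Suc m) (k - Suc m). \<phi> (image_mset Suc B)) else 0)"
proof -
  have s: "sum \<phi> (MS (Suc m) k) = sum \<phi> (MS (Suc m) k \<inter> {A. 0 \<in># A}) + sum \<phi> (MS (Suc m) k - {A. 0 \<in># A})"
    by (rule sum.Int_Diff) (rule finite_MS)
  have e1: "MS (Suc m) k \<inter> {A. 0 \<in># A} = add_mset 0 ` MS m k"
  proof safe
    fix A assume "A \<in> MS (Suc m) k" "0 \<in># A"
    then obtain B where B: "A = add_mset 0 B" by (metis multi_member_split)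
    then show "A \<in> add_mset 0 ` MS m k"
      using \<open>A \<in> MS (Suc m) k\<close> by (auto simp: MS_def)
  qed (auto simp: MS_def)
  have i1: "inj_on (add_mset 0) (MS m k)" by (auto simp: inj_on_def)
  have e2: "MS (Suc m) k - {A. 0 \<in># A} = (if Suc m \<le> k then image_mset Suc ` MS (Suc m) (k - Suc m) else {})"
  proof (intro equalityI subsetI)
    fix A assume A: "A \<in> MS (Suc m) k - {A. 0 \<in># A}"
    define B where "B = image_mset (\<lambda>x. x - 1) A"
    have z: "0 \<notin># A" using A by auto
    have nz: "\<forall>x\<in>#A. x \<noteq> 0" using z by (intro ballI notI) simp
    have "image_mset (\<lambda>x. Suc (x - 1)) A = image_mset (\<lambda>x. x) A"
      by (rule image_mset_cong) (use nz in auto)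
    hence AB: "A = image_mset Suc B" by (simp add: B_def multiset.map_comp comp_def)
    have "sum_mset A = sum_mset B + size B" using AB sum_mset_image_Suc by simp
    moreover have "size B = Suc m" using A by (simp add: B_def MS_def)
    ultimately show "A \<in> (if Suc m \<le> k then image_mset Suc ` MS (Suc m) (k - Suc m) else {})"
      using A AB by (auto simp: MS_def)
  next
    fix A assume "A \<in> (if Suc m \<le> k then image_mset Suc ` MS (Suc m) (k - Suc m) else {})"
    then show "A \<in> MS (Suc m) k - {A. 0 \<in># A}"
      by (auto split: if_splits simp: MS_def sum_mset_image_Suc)
  qed
  have i2: "inj_on (image_mset Suc) X" for X
    by (rule inj_on_inverseI[where g="image_mset (\<lambda>x. x - 1)"]) (rule image_mset_pred_Suc)
  show ?thesis
    unfolding s e1 e2 by (simp add: sum.reindex[OF i1] sum.reindex[OF i2])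
qed

definition Z :: "(nat multiset \<Rightarrow> complex) \<Rightarrow> nat \<Rightarrow> complex fps" where
  "Z \<phi> m = Abs_fps (\<lambda>k. \<Sum>A\<in>MS m k. \<phi> A)"

definition wt :: "complex \<Rightarrow> nat multiset \<Rightarrow> complex" where
  "wt u A = (\<Sum>x\<in>#A. u ^ (2*x+1))"

lemma Z_Suc_nth: "Z \<phi> (Suc m) $ k = (\<Sum>B\<in>MS m k. \<phi> (add_mset 0 B))
     + (if Suc m \<le> k then (\<Sum>B\<in>MS (Suc m) (k - Suc m). \<phi> (image_mset Suc B)) else 0)"
  unfolding Z_def by (simp add: sum_MS_Suc)

abbreviation C where "C \<equiv> Z (\<lambda>_. 1)"

lemma C_rec: "C (Suc m) = C m + qq ^ Suc m * C (Suc m)"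
  by (rule fps_ext, subst (1) Z_Suc_nth) (simp add: fps_X_power_mult_nth Z_def del: power_Suc)

lemma wt_add0: "wt u (add_mset 0 B) = u + wt u B" by (simp add: wt_def)
lemma wt_Suc: "wt u (image_mset Suc B) = u^2 * wt u B"
  by (induction B) (auto simp: wt_def algebra_simps power2_eq_square)

lemma W_rec: "Z (wt u) (Suc m) = Z (wt u) m + fps_const u * C m + qq ^ Suc m * (fps_const (u^2) * Z (wt u) (Suc m))"
  by (rule fps_ext, subst (1) Z_Suc_nth)
     (simp add: fps_X_power_mult_nth wt_add0 wt_Suc sum.distrib sum_distrib_left Z_def del: power_Suc)



definition XX :: "nat \<Rightarrow> (nat multiset \<times> nat multiset) set" where
  "XX n = {(A,B). size A = size B \<and> L0_charge0 A B = n}"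

lemma XX_eq: "XX n = (\<Union>m\<in>{..<Suc n}. \<Union>i\<in>{0..n-m}. MS m i \<times> MS m (n-m-i))"
  by (auto simp: XX_def MS_def L0_charge0_def)

lemma sum_XX: "sum (f :: _ \<Rightarrow> complex) (XX n) =
   (\<Sum>m<Suc n. \<Sum>i=0..n-m. \<Sum>A\<in>MS m i. \<Sum>B\<in>MS m (n-m-i). f (A,B))"
proof -
  have "sum f (XX n) = (\<Sum>m<Suc n. sum f (\<Union>i\<in>{0..n-m}. MS m i \<times> MS m (n-m-i)))"
    unfolding XX_eq
    apply (rule sum.UNION_disjoint)
      apply simp
     apply (simp add: finite_MS)
    apply (auto simp: MS_def)
    done
  also have "\<dots> = (\<Sum>m<Suc n. \<Sum>i=0..n-m. sum f (MS m i \<times> MS m (n-m-i)))"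
    apply (rule sum.cong[OF refl], rule sum.UNION_disjoint)
      apply simp
     apply (simp add: finite_MS)
    apply (auto simp: MS_def)
    done
  also have "\<dots> = (\<Sum>m<Suc n. \<Sum>i=0..n-m. \<Sum>A\<in>MS m i. \<Sum>B\<in>MS m (n-m-i). f (A,B))"
    by (simp add: sum.cartesian_product)
  finally show ?thesis .
qed

lemma A_eig_eq: "A_eig s A B = wt s A - wt (inverse s) B + 1 / (inverse s - s)"
  by (simp add: A_eig_def wt_def power_inverse)

lemma Z_nth: "Z \<phi> m $ i = sum \<phi> (MS m i)" by (simp add: Z_def)

lemma F_nth: "(Z (wt s) m * C m - C m * Z (wt (inverse s)) m + fps_const c * (C m * C m)) $ k =
   (\<Sum>i=0..k. (\<Sum>A\<in>MS m i. wt s A) * (\<Sum>B\<in>MS m (k-i). 1)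
          - (\<Sum>A\<in>MS m i. 1) * (\<Sum>B\<in>MS m (k-i). wt (inverse s) B)
          + c * ((\<Sum>A\<in>MS m i. 1) * (\<Sum>B\<in>MS m (k-i). 1)))"
  by (simp only: fps_add_nth fps_sub_nth fps_mult_left_const_nth)
     (simp only: fps_mult_nth Z_nth sum_subtractf sum.distrib sum_distrib_left[symmetric])

lemma trace_nth:
  "trace_A0 s $ n = (\<Sum>m<Suc n. qq^m * (Z (wt s) m * C m - C m * Z (wt (inverse s)) m
        + fps_const (1 / (inverse s - s)) * (C m * C m))) $ n"
proof -
  define c where "c = 1 / (inverse s - s)"
  have "trace_A0 s $ n = sum (\<lambda>(A,B). A_eig s A B) (XX n)"
    by (simp add: trace_A0_def XX_def)
  also have "\<dots> = (\<Sum>m<Suc n. \<Sum>i=0..n-m. \<Sum>A\<in>MS m i. \<Sum>B\<in>MS m (n-m-i).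
          wt s A * 1 - 1 * wt (inverse s) B + c * (1 * 1))"
    by (simp add: sum_XX A_eig_eq c_def)
  also have "\<dots> = (\<Sum>m<Suc n. \<Sum>i=0..n-m. (\<Sum>A\<in>MS m i. wt s A) * (\<Sum>B\<in>MS m (n-m-i). 1)
          - (\<Sum>A\<in>MS m i. 1) * (\<Sum>B\<in>MS m (n-m-i). wt (inverse s) B)
          + c * ((\<Sum>A\<in>MS m i. 1) * (\<Sum>B\<in>MS m (n-m-i). 1)))"
    unfolding sum_product by (simp only: sum_subtractf sum.distrib sum_distrib_left)
  also have "\<dots> = (\<Sum>m<Suc n. (Z (wt s) m * C m - C m * Z (wt (inverse s)) m
        + fps_const c * (C m * C m)) $ (n - m))"
    by (rule sum.cong[OF refl], simp only: F_nth)
  also have "\<dots> = (\<Sum>m<Suc n. qq^m * (Z (wt s) m * C m - C m * Z (wt (inverse s)) m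
        + fps_const c * (C m * C m))) $ n"
    unfolding fps_sum_nth by (rule sum.cong[OF refl], subst fps_X_power_mult_nth) simp
  finally show ?thesis by (simp add: c_def)
qed



abbreviation I :: "nat \<Rightarrow> complex fps" where "I j \<equiv> inverse (qpoch qq j)"

definition T :: "complex \<Rightarrow> nat \<Rightarrow> nat \<Rightarrow> complex fps" where
  "T c j k = qpoch (fps_const c * qq^(j+1)) k"

definition E :: "complex \<Rightarrow> nat \<Rightarrow> complex fps" where
  "E c m = (\<Sum>j<m. I j * inverse (T c j (m-j)))"

lemma qpoch_0[simp]: "qpoch a 0 = 1" by (simp add: qpoch_def)

lemma qpoch_Suc: "qpoch a (Suc n) = qpoch a n * (1 - a * qq^n)"
  by (simp add: qpoch_def)

lemma qpoch_nth0: "a $ 0 = 0 \<Longrightarrow> qpoch a n $ 0 = 1"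
  by (induction n) (simp_all add: qpoch_Suc)

lemma solve_lin:
  fixes x b a :: "complex fps"
  assumes "x * (1 - a) = b" "a $ 0 = 0"
  shows "x = b * inverse (1 - a)"
proof -
  have "(1 - a) * inverse (1 - a) = 1" using assms(2) by (intro inverse_mult_eq_1') simp
  hence "x = x * ((1 - a) * inverse (1 - a))" by simp
  also have "\<dots> = b * inverse (1 - a)" using assms(1) by (simp add: mult.assoc[symmetric])
  finally show ?thesis .
qed

lemma Z_0: "Z \<phi> 0 = fps_const (\<phi> {#})"
  by (rule fps_ext) (simp add: Z_nth MS_0)

lemma C_closed: "C m = I m"
proof (induction m)
  case 0 then show ?case by (simp add: Z_0)
next
  case (Suc m)
  have "C (Suc m) * (1 - qq ^ Suc m) = C m"
    using C_rec[of m] by (simp add: algebra_simps del: power_Suc)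
  hence "C (Suc m) = C m * inverse (1 - qq ^ Suc m)"
    by (rule solve_lin) simp
  also have "\<dots> = inverse (qpoch qq m * (1 - qq * qq ^ m))"
    using Suc by (simp add: fps_inverse_mult)
  finally show ?case by (simp add: qpoch_Suc)
qed

lemma T_Suc: "j < m \<Longrightarrow> T c j (Suc m - j) = T c j (m - j) * (1 - fps_const c * qq ^ Suc m)"
proof -
  assume "j < m"
  then have e: "Suc m - j = Suc (m - j)" and p: "(j+1) + (m - j) = Suc m" by auto
  have "qq ^ (j + 1) * qq ^ (m - j) = (qq ^ Suc m :: complex fps)"
    by (subst power_add[symmetric]) (simp only: p)
  then show ?thesis unfolding T_def e qpoch_Suc by (simp add: mult.assoc)
qed

lemma E_Suc: "E c (Suc m) = (E c m + I m) * inverse (1 - fps_const c * qq ^ Suc m)"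
proof -
  have "E c (Suc m) = (\<Sum>j<m. I j * inverse (T c j (Suc m - j))) + I m * inverse (T c m 1)"
    by (simp add: E_def)
  also have "(\<Sum>j<m. I j * inverse (T c j (Suc m - j))) =
      (\<Sum>j<m. I j * inverse (T c j (m - j))) * inverse (1 - fps_const c * qq ^ Suc m)"
    unfolding sum_distrib_right
    by (rule sum.cong[OF refl]) (simp add: T_Suc fps_inverse_mult mult.assoc)
  also have "T c m 1 = 1 - fps_const c * qq ^ Suc m"
    by (simp add: T_def qpoch_def)
  finally show ?thesis by (simp add: E_def algebra_simps)
qed

lemma W_closed: "Z (wt u) m = fps_const u * E (u^2) m"
proof (induction m)
  case 0 then show ?case by (simp add: Z_0 E_def wt_def)
next
  case (Suc m)
  have "Z (wt u) (Suc m) * (1 - fps_const (u^2) * qq ^ Suc m) = Z (wt u) m + fps_const u * C m"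
    using W_rec[of u m] by (simp add: algebra_simps del: power_Suc)
  hence "Z (wt u) (Suc m) = (Z (wt u) m + fps_const u * C m) * inverse (1 - fps_const (u^2) * qq ^ Suc m)"
    by (rule solve_lin) simp
  also have "\<dots> = fps_const u * E (u^2) (Suc m)"
    unfolding Suc E_Suc C_closed by (simp add: algebra_simps)
  finally show ?case .
qed

lemma P_shift: "qpoch qq j * qpoch (qq^(j+1)) n = qpoch qq (j+n)"
proof (induction n)
  case (Suc n)
  have "qq ^ (j + 1) * qq ^ n = (qq * qq ^ (j + n) :: complex fps)"
    by (simp add: power_add)
  then show ?case using Suc by (simp add: qpoch_Suc mult.assoc[symmetric])
qed simp

lemma sum_tail_zero:
  fixes f :: "nat \<Rightarrow> complex fps"
  assumes "\<And>m i. i < m \<Longrightarrow> f m $ i = 0" "n < N"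
  shows "(\<Sum>m<N. f m) $ n = (\<Sum>m<Suc n. f m) $ n"
  unfolding fps_sum_nth
  by (rule sum.mono_neutral_right) (use assms in auto)

lemma suminf_fps_nth:
  fixes f :: "nat \<Rightarrow> complex fps"
  assumes "\<And>m i. i < m \<Longrightarrow> f m $ i = 0" "n < N"
  shows "suminf f $ n = (\<Sum>m<N. f m) $ n"
proof -
  define S where "S = Abs_fps (\<lambda>i. (\<Sum>m<Suc i. f m) $ i)"
  have "f sums S"
    unfolding sums_def
  proof (rule tendsto_fpsI)
    fix i
    show "eventually (\<lambda>M. (\<Sum>m<M. f m) $ i = S $ i) sequentially"
      using eventually_ge_at_top[of "Suc i"]
      by eventually_elim (simp add: S_def sum_tail_zero[OF assms(1)])
  qed
  hence "suminf f = S" by (rule sums_unique[symmetric])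
  thus ?thesis by (simp add: S_def sum_tail_zero[OF assms])
qed



lemma qpoch_zero[simp]: "qpoch 0 n = 1" by (simp add: qpoch_def)

lemma P_inv: "qpoch qq k * I k = 1"
  by (intro inverse_mult_eq_1') (simp add: qpoch_nth0)

lemma Phi0_eq: "qPhi [0, 0] [qq] qq = suminf (\<lambda>m. qq^m * (I m * I m))"
  unfolding qPhi_def
  by (rule arg_cong[where f=suminf], rule ext) (simp add: fps_inverse_mult mult.commute)

lemma Phi_eq: "qPhi [0, 0, qq] [fps_const c * qq^(j+1), qq^(j+1)] qq
   = suminf (\<lambda>k. qq^k * (inverse (T c j k) * inverse (qpoch (qq^(j+1)) k)))"
  unfolding qPhi_def
proof (rule arg_cong[where f=suminf], rule ext)
  fix k
  have "qpoch qq k * I k = 1" by (rule P_inv)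
  then show "(\<Prod>a\<leftarrow>[0, 0, qq]. qpoch a k) *
          inverse ((\<Prod>b\<leftarrow>[fps_const c * qq ^ (j + 1), qq ^ (j + 1)]. qpoch b k) * qpoch qq k) *
          ((- 1) ^ k * qq ^ (k * (k - 1) div 2)) ^ (Suc (length [fps_const c * qq ^ (j + 1), qq ^ (j + 1)]) -
           length [0, 0, qq]) * qq ^ k =
         qq ^ k * (inverse (T c j k) * inverse (qpoch (qq ^ (j + 1)) k))"
    by (simp add: fps_inverse_mult T_def algebra_simps)
qed

lemma mult_nth_cong:
  fixes F G H :: "complex fps"
  assumes "\<And>i. i \<le> n \<Longrightarrow> F $ i = G $ i"
  shows "(H * F) $ n = (H * G) $ n"
  unfolding fps_mult_nth using assms by (intro sum.cong) auto

lemma Xpow_nth_less: "i < j \<Longrightarrow> (qq ^ j * (A :: complex fps)) $ i = 0"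
  by (simp add: fps_X_power_mult_nth)



definition h :: "complex \<Rightarrow> nat \<Rightarrow> nat \<Rightarrow> complex fps" where
  "h c j k = qq^(j + Suc k) * (I j * I (j + Suc k) * inverse (T c j (Suc k)))"

lemma S_nth:
  "(\<Sum>j. qq ^ j * inverse (qpoch qq j * qpoch qq j)
         * (qPhi [0, 0, qq] [fps_const c * qq ^ (j+1), qq ^ (j+1)] qq - 1)) $ n
   = (\<Sum>m<Suc n. qq^m * (E c m * I m)) $ n"
proof -
  define a where "a j k = qq^k * (inverse (T c j k) * inverse (qpoch (qq^(j+1)) k))" for j k
  define G where "G j = (\<Sum>k<n. a j (Suc k))" for j
  define g where "g j k = h c j k $ n" for j k
  have a0: "a j 0 = 1" for j by (simp add: a_def T_def)
  have "(\<Sum>j. qq ^ j * inverse (qpoch qq j * qpoch qq j)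
         * (qPhi [0, 0, qq] [fps_const c * qq ^ (j+1), qq ^ (j+1)] qq - 1)) $ n
     = (\<Sum>j<Suc n. (qq ^ j * inverse (qpoch qq j * qpoch qq j)
         * (qPhi [0, 0, qq] [fps_const c * qq ^ (j+1), qq ^ (j+1)] qq - 1)) $ n)"
    unfolding fps_sum_nth[symmetric]
    by (rule suminf_fps_nth) (simp_all add: mult.assoc Xpow_nth_less)
  also have "\<dots> = (\<Sum>j<Suc n. (qq ^ j * inverse (qpoch qq j * qpoch qq j) * G j) $ n)"
  proof (rule sum.cong[OF refl], rule mult_nth_cong)
    fix j i assume "i \<le> n"
    have "qPhi [0, 0, qq] [fps_const c * qq ^ (j+1), qq ^ (j+1)] qq $ i = (\<Sum>k<Suc n. a j k) $ i"
      unfolding Phi_eq a_def[symmetric]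
      by (rule suminf_fps_nth) (use \<open>i \<le> n\<close> in \<open>simp_all add: a_def Xpow_nth_less\<close>)
    also have "(\<Sum>k<Suc n. a j k) = 1 + G j"
      unfolding G_def sum.lessThan_Suc_shift a0 ..
    finally show "(qPhi [0, 0, qq] [fps_const c * qq ^ (j+1), qq ^ (j+1)] qq - 1) $ i = G j $ i"
      by simp
  qed
  also have "\<dots> = (\<Sum>j<Suc n. \<Sum>k<n. g j k)"
  proof (rule sum.cong[OF refl])
    fix j
    have "qq ^ j * inverse (qpoch qq j * qpoch qq j) * G j = (\<Sum>k<n. h c j k)"
      unfolding G_def sum_distrib_left
    proof (rule sum.cong[OF refl])
      fix k
      have e: "I j * inverse (qpoch (qq^(j+1)) (Suc k)) = I (j + Suc k)"
        by (simp only: fps_inverse_mult[symmetric] P_shift)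
      have "qq ^ j * inverse (qpoch qq j * qpoch qq j) * a j (Suc k)
          = qq^(j + Suc k) * (I j * inverse (T c j (Suc k)) * (I j * inverse (qpoch (qq^(j+1)) (Suc k))))"
        by (simp only: a_def fps_inverse_mult power_add) (simp only: mult_ac)
      also have "\<dots> = h c j k" unfolding e h_def by (simp only: mult_ac)
      finally show "qq ^ j * inverse (qpoch qq j * qpoch qq j) * a j (Suc k) = h c j k" .
    qed
    then show "(qq ^ j * inverse (qpoch qq j * qpoch qq j) * G j) $ n = (\<Sum>k<n. g j k)"
      by (simp add: g_def fps_sum_nth)
  qed
  also have "\<dots> = (\<Sum>(j,k)\<in>{..<Suc n} \<times> {..<n}. g j k)"
    by (rule sum.cartesian_product)
  also have "\<dots> = (\<Sum>(j,k)\<in>{(j,k). j + k < n}. g j k)"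
  proof (rule sum.mono_neutral_right)
    have "g j k = 0" if "\<not> j + k < n" for j k
      unfolding g_def h_def by (rule Xpow_nth_less) (use that in simp)
    then show "\<forall>x\<in>{..<Suc n} \<times> {..<n} - {(j, k). j + k < n}. (case x of (j, k) \<Rightarrow> g j k) = 0"
      by auto
  qed auto
  also have "\<dots> = (\<Sum>m<n. \<Sum>j\<le>m. g j (m - j))"
    by (rule sum.triangle_reindex)
  also have "\<dots> = (\<Sum>m<Suc n. \<Sum>j<m. g j (m - j - 1))"
    unfolding sum.lessThan_Suc_shift[of "\<lambda>m. \<Sum>j<m. g j (m - j - 1)" n]
    by (simp add: lessThan_Suc_atMost)
  also have "\<dots> = (\<Sum>m<Suc n. qq^m * (E c m * I m)) $ n"
    unfolding fps_sum_nth
  proof (rule sum.cong[OF refl])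
    fix m
    have "qq^m * (E c m * I m) = (\<Sum>j<m. h c j (m - j - 1))"
      unfolding E_def sum_distrib_left sum_distrib_right
    proof (rule sum.cong[OF refl])
      fix j assume "j \<in> {..<m}"
      then have e: "Suc (m - j - 1) = m - j" "j + (m - j) = m" by auto
      show "qq ^ m * (I j * inverse (T c j (m - j)) * I m) = h c j (m - j - 1)"
        unfolding h_def e by (simp only: mult_ac)
    qed
    then show "(\<Sum>j<m. g j (m - j - 1)) = (qq ^ m * (E c m * I m)) $ n"
      by (simp add: g_def fps_sum_nth)
  qed
  finally show ?thesis .
qed



lemma ring_aux: "(x::complex fps) * (a * e1 * i - i * (b * e2) + c * (i * i))
   = a * (x * (e1 * i)) - b * (x * (e2 * i)) + c * (x * (i * i))"
  by (simp add: algebra_simps)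

theorem theorem2p4:
  fixes s :: complex
  assumes "s \<noteq> 0" and "s\<^sup>2 \<noteq> 1"
  shows "trace_A0 s =
      fps_const (1 / (inverse s - s)) * qPhi [0, 0] [qq] qq
    + fps_const s * (\<Sum>j. qq ^ j * inverse (qpoch qq j * qpoch qq j)
         * (qPhi [0, 0, qq] [fps_const (s\<^sup>2) * qq ^ (j+1), qq ^ (j+1)] qq - 1))
    - fps_const (inverse s) * (\<Sum>j. qq ^ j * inverse (qpoch qq j * qpoch qq j)
         * (qPhi [0, 0, qq] [fps_const (inverse (s\<^sup>2)) * qq ^ (j+1), qq ^ (j+1)] qq - 1))"
proof (rule fps_ext)
  fix n
  define c where "c = 1 / (inverse s - s)"
  define S0 where "S0 = (\<Sum>m<Suc n. qq^m * (I m * I m))"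
  define S1 where "S1 = (\<Sum>m<Suc n. qq^m * (E (s\<^sup>2) m * I m))"
  define S2 where "S2 = (\<Sum>m<Suc n. qq^m * (E (inverse (s\<^sup>2)) m * I m))"
  have "(\<Sum>m<Suc n. qq^m * (Z (wt s) m * C m - C m * Z (wt (inverse s)) m
        + fps_const c * (C m * C m))) = fps_const s * S1 - fps_const (inverse s) * S2 + fps_const c * S0"
    unfolding W_closed C_closed S0_def S1_def S2_def power_inverse sum_distrib_left
      sum_subtractf[symmetric] sum.distrib[symmetric]
    by (rule sum.cong[OF refl]) (rule ring_aux)
  hence L: "trace_A0 s $ n = (fps_const s * S1 - fps_const (inverse s) * S2 + fps_const c * S0) $ n"
    by (simp only: trace_nth c_def)
  have P0: "qPhi [0, 0] [qq] qq $ n = S0 $ n"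
    unfolding Phi0_eq S0_def by (rule suminf_fps_nth) (simp_all add: Xpow_nth_less)
  show "trace_A0 s $ n = (fps_const (1 / (inverse s - s)) * qPhi [0, 0] [qq] qq
    + fps_const s * (\<Sum>j. qq ^ j * inverse (qpoch qq j * qpoch qq j)
         * (qPhi [0, 0, qq] [fps_const (s\<^sup>2) * qq ^ (j+1), qq ^ (j+1)] qq - 1))
    - fps_const (inverse s) * (\<Sum>j. qq ^ j * inverse (qpoch qq j * qpoch qq j)
         * (qPhi [0, 0, qq] [fps_const (inverse (s\<^sup>2)) * qq ^ (j+1), qq ^ (j+1)] qq - 1))) $ n"
    unfolding L fps_add_nth fps_sub_nth fps_mult_left_const_nth S_nth P0 c_def[symmetric]
      S1_def[symmetric] S2_def[symmetric]
    by simp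
qed

end
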